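(* Let $\mathcal{H}$ be a Hilbert space, $n\ge2$, and let $y_1,\dots,y_n\in\mathcal{H}$ satisfy $\|y_i\|\le1$ for all $i$ and $\|y_i-y_j\|>1/3$ for all $i\ne j$. Let $\mu=\frac1n\sum_{i=1}^n\delta_{y_i}$ and $\mu_n=\frac1n\sum_{i=1}^n\delta_{X_i}$ with $X_1,\dots,X_n$ i.i.d. of law $\mu$. Then $$\mathbb{E}\,W_2(\mu,\mu_n)\ge\mathbb{E}\,W_1(\mu,\mu_n)\ge\frac{1}{12\sqrt2}.$$ Consequently, if $y_1,\dots,y_n$ lie in a subspace of dimension $d$, then $\big(\mathbb{E}\,S_1^2(\mu,\mu_n)\big)^{1/2}\ge\frac{1}{12\sqrt{2d}}$.
   Context: $\Pi(\mu,\nu)$ is the set of couplings of $\mu,\nu$. $W_p(\mu,\nu)=\inf_{\pi\in\Pi(\mu,\nu)}\big(\int\|x-y\|^p\,d\pi(x,y)\big)^{1/p}$ for $p=1,2$, and $S_1(\mu,\nu)=\inf_{\pi\in\Pi(\mu,\nu)}\sup_{\|w\|\le1}\big(\int\langle w,x-y\rangle^2\,d\pi(x,y)\big)^{1/2}$. *)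

theory Defs
  imports "HOL-Analysis.Analysis" "HOL-Probability.Probability"
begin

definition couplings :: "'a pmf \<Rightarrow> 'b pmf \<Rightarrow> ('a \<times> 'b) pmf set" where
  "couplings p q = {\<pi>. map_pmf fst \<pi> = p \<and> map_pmf snd \<pi> = q}"

definition W1 :: "'a::real_normed_vector pmf \<Rightarrow> 'a pmf \<Rightarrow> real" where
  "W1 p q = (INF \<pi>\<in>couplings p q. measure_pmf.expectation \<pi> (\<lambda>(x,y). norm (x - y)))"

definition W2 :: "'a::real_normed_vector pmf \<Rightarrow> 'a pmf \<Rightarrow> real" where
  "W2 p q = sqrt (INF \<pi>\<in>couplings p q. measure_pmf.expectation \<pi> (\<lambda>(x,y). (norm (x - y))^2))"

definition S1 :: "'a::real_inner pmf \<Rightarrow> 'a pmf \<Rightarrow> real" where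
  "S1 p q = (INF \<pi>\<in>couplings p q.
      sqrt (SUP w\<in>{w. norm w \<le> 1}. measure_pmf.expectation \<pi> (\<lambda>(x,y). (inner w (x - y))^2)))"

definition empirical :: "nat \<Rightarrow> (nat \<Rightarrow> 'a) \<Rightarrow> 'a pmf" where
  "empirical n y = map_pmf y (pmf_of_set {..<n})"

definition iid_sample :: "nat \<Rightarrow> 'a::zero pmf \<Rightarrow> (nat \<Rightarrow> 'a) pmf" where
  "iid_sample n p = Pi_pmf {..<n} 0 (\<lambda>_. p)"

end

theory Submission
  imports Defs
begin

lemma jensen_sq_pmf:
  fixes f :: "'b \<Rightarrow> real"
  assumes "finite (set_pmf M)"
  shows "(measure_pmf.expectation M f)^2 \<le> measure_pmf.expectation M (\<lambda>x. (f x)^2)"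
proof -
  have "measure_pmf.variance M f = measure_pmf.expectation M (\<lambda>x. (f x)^2) - (measure_pmf.expectation M f)^2"
    by (rule measure_pmf.variance_eq) (auto intro: integrable_measure_pmf_finite assms)
  moreover have "0 \<le> measure_pmf.variance M f" by (rule measure_pmf.variance_positive)
  ultimately show ?thesis by linarith
qed

lemma coupling_set:
  assumes "\<pi> \<in> couplings p q" "(x, z) \<in> set_pmf \<pi>"
  shows "x \<in> set_pmf p" "z \<in> set_pmf q"
proof -
  have "map_pmf fst \<pi> = p" "map_pmf snd \<pi> = q" using assms(1) by (auto simp: couplings_def)
  then show "x \<in> set_pmf p" "z \<in> set_pmf q"
    using assms(2) by (metis fst_conv imageI set_map_pmf snd_conv)+
qed

lemma coupling_finite:
  assumes "\<pi> \<in> couplings p q" "finite (set_pmf p)" "finite (set_pmf q)"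
  shows "finite (set_pmf \<pi>)"
proof -
  have "set_pmf \<pi> \<subseteq> set_pmf p \<times> set_pmf q" using coupling_set[OF assms(1)] by auto
  then show ?thesis using assms(2,3) finite_subset by blast
qed

lemma couplings_nonempty: "pair_pmf p q \<in> couplings p q"
  by (simp add: couplings_def map_fst_pair_pmf map_snd_pair_pmf)

lemma W1_le:
  fixes p q :: "'a::real_normed_vector pmf"
  assumes "\<pi> \<in> couplings p q"
  shows "W1 p q \<le> measure_pmf.expectation \<pi> (\<lambda>(x,y). norm (x - y))"
  unfolding W1_def
  by (rule cINF_lower[OF _ assms], rule bdd_belowI[where m=0])
     (auto intro!: integral_nonneg_AE)

lemma W1_nonneg:
  fixes p q :: "'a::real_normed_vector pmf"
  shows "0 \<le> W1 p q"
  unfolding W1_def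
  using couplings_nonempty
  by (intro cINF_greatest) (auto intro!: integral_nonneg_AE)

lemma W1_le_W2:
  fixes p q :: "'a::real_normed_vector pmf"
  assumes "finite (set_pmf p)" "finite (set_pmf q)"
  shows "W1 p q \<le> W2 p q"
proof -
  have "(W1 p q)^2 \<le> (INF \<pi>\<in>couplings p q. measure_pmf.expectation \<pi> (\<lambda>(x,y). (norm (x - y))^2))"
  proof (rule cINF_greatest)
    show "couplings p q \<noteq> {}" using couplings_nonempty by blast
  next
    fix \<pi> assume \<pi>: "\<pi> \<in> couplings p q"
    have "(W1 p q)^2 \<le> (measure_pmf.expectation \<pi> (\<lambda>(x,y). norm (x - y)))^2"
      using W1_le[OF \<pi>] W1_nonneg[of p q] by (intro power_mono) auto
    also have "\<dots> \<le> measure_pmf.expectation \<pi> (\<lambda>xy. ((\<lambda>(x,y). norm (x - y)) xy)^2)"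
      by (rule jensen_sq_pmf[OF coupling_finite[OF \<pi> assms]])
    also have "\<dots> = measure_pmf.expectation \<pi> (\<lambda>(x,y). (norm (x - y))^2)"
      by (simp add: case_prod_unfold)
    finally show "(W1 p q)^2 \<le> measure_pmf.expectation \<pi> (\<lambda>(x,y). (norm (x - y))^2)" .
  qed
  then show ?thesis unfolding W2_def by (rule real_le_rsqrt)
qed


definition orthonormal :: "'a::real_inner set \<Rightarrow> bool" where
  "orthonormal C \<longleftrightarrow> (\<forall>c\<in>C. norm c = 1) \<and> (\<forall>c\<in>C. \<forall>c'\<in>C. c \<noteq> c' \<longrightarrow> inner c c' = 0)"

lemma orth_residual:
  fixes b :: "'a::real_inner"
  assumes "finite C" "orthonormal C" "c0 \<in> C"
  shows "inner c0 (b - (\<Sum>c\<in>C. inner c b *\<^sub>R c)) = 0"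
proof -
  have "inner c0 (\<Sum>c\<in>C. inner c b *\<^sub>R c) = (\<Sum>c\<in>C. inner c b * inner c0 c)"
    by (simp add: inner_sum_right)
  also have "\<dots> = (\<Sum>c\<in>C. if c = c0 then inner c0 b else 0)"
  proof (rule sum.cong[OF refl])
    fix c assume "c \<in> C"
    then show "inner c b * inner c0 c = (if c = c0 then inner c0 b else 0)"
      using assms(2,3) unfolding orthonormal_def
      by (auto simp: dot_square_norm)
  qed
  also have "\<dots> = inner c0 b" using assms(1,3) by simp
  finally show ?thesis by (simp add: inner_diff_right)
qed

lemma gram_schmidt:
  fixes B :: "'a::real_inner set"
  assumes "finite B"
  shows "\<exists>C. finite C \<and> card C \<le> card B \<and> span C = span B \<and> orthonormal C"
  using assms
proof (induction B rule: finite_induct)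
  case empty
  then show ?case by (intro exI[of _ "{}"]) (auto simp: orthonormal_def)
next
  case (insert b B)
  then obtain C where C: "finite C" "card C \<le> card B" "span C = span B" "orthonormal C" by blast
  define b' where "b' = b - (\<Sum>c\<in>C. inner c b *\<^sub>R c)"
  have sC: "(\<Sum>c\<in>C. inner c b *\<^sub>R c) \<in> span C"
    by (intro span_sum span_scale span_base)
  show ?case
  proof (cases "b' = 0")
    case True
    then have "b \<in> span C" using sC b'_def by simp
    then have "b \<in> span B" using C(3) by simp
    then have "span (insert b B) = span C" using C(3) by (simp add: span_redundant)
    then show ?thesis using C insert by (intro exI[of _ C]) auto
  next
    case False
    define u where "u = (1 / norm b') *\<^sub>R b'"
    have nu: "norm u = 1" using False by (simp add: u_def)
    have ou: "inner c u = 0" if "c \<in> C" for c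
      using orth_residual[OF C(1,4) that, of b] by (simp add: u_def b'_def)
    have "span (insert u C) = span (insert b' C)"
    proof -
      have "u \<in> span (insert b' C)" unfolding u_def by (intro span_scale span_base) auto
      moreover have "b' \<in> span (insert u C)"
      proof -
        have "b' = norm b' *\<^sub>R u" using False by (simp add: u_def)
        then show ?thesis by (metis insertI1 span_base span_scale)
      qed
      ultimately have "span (insert b' (insert u C)) = span (insert u C)"
        "span (insert u (insert b' C)) = span (insert b' C)" by (simp_all add: span_redundant)
      then show ?thesis by (simp add: insert_commute)
    qed
    also have "\<dots> = span (insert b C)"
      by (rule eq_span_insert_eq) (simp add: b'_def sC span_neg)
    also have "\<dots> = span (insert b B)"
      using C(3) by (simp add: span_insert)
    finally have sp: "span (insert u C) = span (insert b B)" .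
    have "orthonormal (insert u C)"
      using C(4) nu ou unfolding orthonormal_def by (auto simp: inner_commute)
    moreover have "card (insert u C) \<le> card (insert b B)"
      using C(1,2) insert(1,2) by (simp add: card_insert_if)
    ultimately show ?thesis using sp C(1) by (intro exI[of _ "insert u C"]) auto
  qed
qed

lemma parseval:
  fixes v :: "'a::real_inner"
  assumes "finite C" "orthonormal C" "v \<in> span C"
  shows "(norm v)^2 = (\<Sum>c\<in>C. (inner c v)^2)"
proof -
  define r where "r = v - (\<Sum>c\<in>C. inner c v *\<^sub>R c)"
  have "r \<in> span C" unfolding r_def
    by (intro span_diff assms(3) span_sum span_scale span_base)
  moreover have "orthogonal r c" if "c \<in> C" for c
    using orth_residual[OF assms(1,2) that, of v] unfolding r_def orthogonal_def
    by (simp add: inner_commute)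
  ultimately have "orthogonal r r" by (metis orthogonal_to_span)
  then have "r = 0" by (simp add: orthogonal_def)
  then have v: "v = (\<Sum>c\<in>C. inner c v *\<^sub>R c)" by (simp add: r_def)
  have "(norm v)^2 = inner v v" by (simp add: dot_square_norm)
  also have "\<dots> = inner v (\<Sum>c\<in>C. inner c v *\<^sub>R c)" using v by metis
  also have "\<dots> = (\<Sum>c\<in>C. (inner c v)^2)"
    by (simp add: inner_sum_right power2_eq_square inner_commute)
  finally show ?thesis .
qed


lemma pexp_sum:
  assumes "finite (set_pmf M)"
  shows "measure_pmf.expectation M (f :: _ \<Rightarrow> real) = (\<Sum>a\<in>set_pmf M. f a * pmf M a)"
  by (rule integral_measure_pmf_real[OF assms]) auto

lemma pexp_mono:
  assumes "finite (set_pmf M)" "\<And>a. a \<in> set_pmf M \<Longrightarrow> (f a :: real) \<le> g a"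
  shows "measure_pmf.expectation M f \<le> measure_pmf.expectation M g"
  unfolding pexp_sum[OF assms(1)]
  by (intro sum_mono mult_right_mono assms(2)) auto

lemma pexp_cong:
  assumes "finite (set_pmf M)" "\<And>a. a \<in> set_pmf M \<Longrightarrow> (f a :: real) = g a"
  shows "measure_pmf.expectation M f = measure_pmf.expectation M g"
  unfolding pexp_sum[OF assms(1)]
  by (intro sum.cong) (auto simp: assms(2))

lemma S1_ge:
  fixes p q :: "'a::real_inner pmf"
  assumes fp: "finite (set_pmf p)" and fq: "finite (set_pmf q)"
    and C: "finite C" "orthonormal C" "set_pmf p \<subseteq> span C" "set_pmf q \<subseteq> span C"
    and d: "card C \<le> d" "d > 0"
  shows "W1 p q / sqrt d \<le> S1 p q"
  unfolding S1_def
proof (rule cINF_greatest)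
  show "couplings p q \<noteq> {}" using couplings_nonempty by blast
next
  fix \<pi> assume \<pi>: "\<pi> \<in> couplings p q"
  have f\<pi>: "finite (set_pmf \<pi>)" by (rule coupling_finite[OF \<pi> fp fq])
  have vC: "x - z \<in> span C" if "(x, z) \<in> set_pmf \<pi>" for x z
    using coupling_set[OF \<pi> that] C(3,4) by (intro span_diff) auto
  define Q where "Q = (\<lambda>w. measure_pmf.expectation \<pi> (\<lambda>(x,y). (inner w (x - y))^2))"
  define N where "N = measure_pmf.expectation \<pi> (\<lambda>(x,y). (norm (x - y))^2)"
  have bdd: "bdd_above (Q ` {w. norm w \<le> 1})"
  proof (rule bdd_aboveI[where M = N])
    fix t assume "t \<in> Q ` {w. norm w \<le> 1}"
    then obtain w where w: "norm w \<le> 1" "t = Q w" by auto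
    have "Q w \<le> N" unfolding Q_def N_def
    proof (rule pexp_mono[OF f\<pi>])
      fix a assume "a \<in> set_pmf \<pi>"
      obtain x z where a: "a = (x, z)" by fastforce
      have "\<bar>inner w (x - z)\<bar> \<le> norm w * norm (x - z)" by (rule Cauchy_Schwarz_ineq2)
      also have "\<dots> \<le> norm (x - z)" using w(1) by (simp add: mult_left_le_one_le)
      finally have "\<bar>inner w (x - z)\<bar> \<le> \<bar>norm (x - z)\<bar>" by simp
      then show "(case a of (x, y) \<Rightarrow> (inner w (x - y))^2) \<le> (case a of (x, y) \<Rightarrow> (norm (x - y))^2)"
        unfolding a abs_le_square_iff by simp
    qed
    then show "t \<le> N" using w by simp
  qed
  have Q0: "Q 0 = 0" unfolding Q_def by (simp add: case_prod_unfold)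
  have sumQ: "(\<Sum>c\<in>C. Q c) = N"
  proof -
    have "(\<Sum>c\<in>C. Q c) = measure_pmf.expectation \<pi> (\<lambda>a. \<Sum>c\<in>C. (case a of (x,y) \<Rightarrow> (inner c (x - y))^2))"
      unfolding Q_def
      by (rule Bochner_Integration.integral_sum[where I=C and f="\<lambda>c a. case a of (x,y) \<Rightarrow> (inner c (x - y))^2", symmetric])
         (auto intro: integrable_measure_pmf_finite f\<pi>)
    also have "\<dots> = N" unfolding N_def
    proof (rule pexp_cong[OF f\<pi>])
      fix a assume a: "a \<in> set_pmf \<pi>"
      obtain x z where az: "a = (x, z)" by fastforce
      show "(\<Sum>c\<in>C. case a of (x, y) \<Rightarrow> (inner c (x - y))\<^sup>2) = (case a of (x, y) \<Rightarrow> (norm (x - y))\<^sup>2)"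
        using parseval[OF C(1,2) vC[OF a[unfolded az]]] az by simp
    qed
    finally show ?thesis .
  qed
  have NQ: "N / d \<le> (SUP w\<in>{w. norm w \<le> 1}. Q w)"
  proof (cases "C = {}")
    case True
    then have "N = 0" using sumQ by simp
    then show ?thesis using cSUP_upper[OF _ bdd, of 0] Q0 by simp
  next
    case False
    have "\<exists>c\<in>C. N / card C \<le> Q c"
    proof (rule ccontr)
      assume "\<not> ?thesis"
      then have "\<forall>c\<in>C. Q c < N / card C" by auto
      then have "(\<Sum>c\<in>C. Q c) < (\<Sum>c\<in>C. N / card C)"
        using False C(1) by (intro sum_strict_mono) auto
      then show False using sumQ False C(1) by simp
    qed
    then obtain c where c: "c \<in> C" "N / card C \<le> Q c" by blast
    have N0: "0 \<le> N" unfolding N_def by (auto intro!: integral_nonneg_AE)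
    have "card C > 0" using False C(1) by (simp add: card_gt_0_iff)
    then have "N / d \<le> N / card C" using d N0 by (intro divide_left_mono) auto
    also have "\<dots> \<le> Q c" by (rule c(2))
    also have "\<dots> \<le> (SUP w\<in>{w. norm w \<le> 1}. Q w)"
      using C(2) c(1) by (intro cSUP_upper[OF _ bdd]) (auto simp: orthonormal_def)
    finally show ?thesis .
  qed
  define D where "D = measure_pmf.expectation \<pi> (\<lambda>(x,y). norm (x - y))"
  have D2: "D^2 \<le> N" unfolding D_def N_def
    using jensen_sq_pmf[OF f\<pi>, of "\<lambda>(x,y). norm (x - y)"] by (simp add: case_prod_unfold)
  have "W1 p q / sqrt d \<le> D / sqrt d" using W1_le[OF \<pi>] d unfolding D_def
    by (intro divide_right_mono) auto
  also have "\<dots> = sqrt (D^2 / d)" using W1_nonneg[of p q] W1_le[OF \<pi>] unfolding D_def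
    by (simp add: real_sqrt_divide)
  also have "\<dots> \<le> sqrt (N / d)" using D2 d by (intro real_sqrt_le_mono divide_right_mono) auto
  also have "\<dots> \<le> sqrt (SUP w\<in>{w. norm w \<le> 1}. Q w)" using NQ by (rule real_sqrt_le_mono)
  finally show "W1 p q / sqrt d \<le> sqrt (SUP w\<in>{w. norm w \<le> 1}. measure_pmf.expectation \<pi> (\<lambda>(x, y). (inner w (x - y))\<^sup>2))"
    unfolding Q_def .
qed


lemma exp_bound:
  assumes "n \<ge> (2::nat)"
  shows "1 / (4 * sqrt 2) \<le> (1 - 1 / real n)^n"
proof -
  define m where "m = real n - 1"
  have m1: "m \<ge> 1" using assms by (simp add: m_def)
  have "(1 + 1/m)^(n-1) \<le> exp (1/m)^(n-1)"
    using m1 by (intro power_mono) auto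
  also have "\<dots> = exp (real (n-1) * (1/m))" by (rule exp_of_nat_mult[symmetric])
  also have "real (n-1) = m" using assms by (simp add: m_def of_nat_diff)
  finally have e1: "(1 + 1/m)^(n-1) \<le> exp 1" using m1 by simp
  have eq: "(1 - 1 / real n) = 1 / (1 + 1/m)"
    using m1 assms by (simp add: m_def field_simps)
  have pos: "0 < (1 + 1/m)^(n-1)" using m1 by (intro zero_less_power) (simp add: add_pos_pos)
  have "(1 - 1 / real n)^n = (1 - 1 / real n) * (1 - 1 / real n)^(n-1)"
    using assms by (metis Suc_diff_1 le_trans one_le_numeral linorder_not_le not_one_le_zero power_Suc)
  also have "(1 - 1 / real n)^(n-1) = 1 / (1 + 1/m)^(n-1)" unfolding eq by (simp add: power_one_over)
  finally have A: "(1 - 1 / real n)^n = (1 - 1 / real n) / (1 + 1/m)^(n-1)" by simp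
  have h: "1 - 1 / real n \<ge> 1/2" using assms by (simp add: field_simps)
  have "1 / (4 * sqrt 2) \<le> (1/2) / exp 1"
  proof -
    have "exp 1 < (272/100::real)" by (rule e_less_272)
    moreover have "(136/100::real) \<le> sqrt 2" by (rule real_le_rsqrt) (simp add: power2_eq_square)
    ultimately show ?thesis by (simp add: field_simps)
  qed
  also have "\<dots> \<le> (1 - 1 / real n) / exp 1" using h by (intro divide_right_mono) auto
  also have "\<dots> \<le> (1 - 1 / real n) / (1 + 1/m)^(n-1)"
    using e1 pos h by (intro divide_left_mono) auto
  finally show ?thesis using A by simp
qed


lemma set_empirical:
  assumes "n > 0"
  shows "set_pmf (empirical n y) = y ` {..<n}"
  using assms unfolding empirical_def by (simp add: lessThan_empty_iff)

lemma inj_sep: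
  fixes y :: "nat \<Rightarrow> 'a::real_normed_vector"
  assumes "\<forall>i<n. \<forall>j<n. i \<noteq> j \<longrightarrow> norm (y i - y j) > 1/3"
  shows "inj_on y {..<n}"
proof (rule inj_onI)
  fix i j assume "i \<in> {..<n}" "j \<in> {..<n}" "y i = y j"
  then show "i = j" using assms by force
qed

lemma W1_lower:
  fixes y X :: "nat \<Rightarrow> 'a::real_normed_vector"
  assumes n: "n > 0"
    and sep: "\<forall>i<n. \<forall>j<n. i \<noteq> j \<longrightarrow> norm (y i - y j) > 1/3"
    and X: "\<forall>j<n. X j \<in> y ` {..<n}"
  shows "real (card {i. i<n \<and> (\<forall>j<n. X j \<noteq> y i)}) / (3 * real n) \<le> W1 (empirical n y) (empirical n X)"
  unfolding W1_def
proof (rule cINF_greatest)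
  show "couplings (empirical n y) (empirical n X) \<noteq> {}" using couplings_nonempty by blast
next
  fix \<pi> assume \<pi>: "\<pi> \<in> couplings (empirical n y) (empirical n X)"
  define I where "I = {i. i<n \<and> (\<forall>j<n. X j \<noteq> y i)}"
  define E where "E = y ` I"
  have sy: "set_pmf (empirical n y) = y ` {..<n}" by (rule set_empirical[OF n])
  have sX: "set_pmf (empirical n X) = X ` {..<n}" by (rule set_empirical[OF n])
  have f\<pi>: "finite (set_pmf \<pi>)" by (rule coupling_finite[OF \<pi>]) (simp_all add: sy sX)
  have "measure_pmf.expectation \<pi> (\<lambda>a. indicator E (fst a) / 3)
        \<le> measure_pmf.expectation \<pi> (\<lambda>(x,y). norm (x - y))"
  proof (rule pexp_mono[OF f\<pi>])
    fix a assume a: "a \<in> set_pmf \<pi>"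
    obtain x z where az: "a = (x, z)" by fastforce
    have x: "x \<in> y ` {..<n}" and z: "z \<in> X ` {..<n}"
      using coupling_set[OF \<pi> a[unfolded az]] sy sX by auto
    show "indicator E (fst a) / 3 \<le> (case a of (x, y) \<Rightarrow> norm (x - y))"
    proof (cases "x \<in> E")
      case True
      then obtain i where i: "i \<in> I" "x = y i" unfolding E_def by auto
      obtain j where j: "j < n" "z = X j" using z by auto
      obtain k where k: "k < n" "X j = y k" using X j(1) by auto
      have "k \<noteq> i" using i j k unfolding I_def by auto
      then have "norm (y i - y k) > 1/3" using sep i k unfolding I_def by auto
      then show ?thesis using True i j k az by simp
    next
      case False
      then show ?thesis using az by simp
    qed
  qed
  moreover have "measure_pmf.expectation \<pi> (\<lambda>a. indicator E (fst a) / 3)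
      = measure_pmf.expectation (map_pmf fst \<pi>) (indicator E :: 'a \<Rightarrow> real) / 3"
    by (simp only: integral_map_pmf integral_divide_zero)
  moreover have "map_pmf fst \<pi> = empirical n y" using \<pi> by (simp add: couplings_def)
  moreover have "measure_pmf.expectation (empirical n y) (indicator E :: 'a \<Rightarrow> real) = real (card I) / real n"
  proof -
    have "measure_pmf.expectation (empirical n y) (indicator E :: 'a \<Rightarrow> real) = measure (empirical n y) E"
      by simp
    also have "\<dots> = measure (pmf_of_set {..<n}) (y -` E)" unfolding empirical_def by simp
    also have "\<dots> = card ({..<n} \<inter> y -` E) / card {..<n}"
      using n by (subst measure_pmf_of_set) (auto simp: lessThan_empty_iff)
    also have "{..<n} \<inter> y -` E = I"
      using inj_sep[OF sep] unfolding E_def I_def by (auto simp: inj_on_def)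
    finally show ?thesis by simp
  qed
  ultimately show "real (card {i. i<n \<and> (\<forall>j<n. X j \<noteq> y i)}) / (3 * real n)
      \<le> measure_pmf.expectation \<pi> (\<lambda>(x,y). norm (x - y))"
    unfolding I_def by simp
qed


lemma exp_empty:
  fixes y :: "nat \<Rightarrow> 'a::real_normed_vector"
  assumes n: "n > 0" and inj: "inj_on y {..<n}"
  shows "measure_pmf.expectation (iid_sample n (empirical n y))
           (\<lambda>X. real (card {i. i<n \<and> (\<forall>j<n. X j \<noteq> y i)}) / (3 * real n)) = (1 - 1/real n)^n / 3"
proof -
  define A where "A = (\<lambda>i. Pi {..<n} (\<lambda>_. - {y i}))"
  define P where "P = iid_sample n (empirical n y)"
  have c: "real (card {i. i<n \<and> (\<forall>j<n. X j \<noteq> y i)}) = (\<Sum>i<n. indicator (A i) X)" for X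
  proof -
    have "(\<Sum>i<n. indicator (A i) X) = (\<Sum>i<n. of_bool (\<forall>j<n. X j \<noteq> y i) :: real)"
      by (intro sum.cong) (auto simp: A_def indicator_def)
    also have "\<dots> = real (card ({..<n} \<inter> {i. \<forall>j<n. X j \<noteq> y i}))" by simp
    also have "{..<n} \<inter> {i. \<forall>j<n. X j \<noteq> y i} = {i. i<n \<and> (\<forall>j<n. X j \<noteq> y i)}" by auto
    finally show ?thesis by simp
  qed
  have mA: "measure P (A i) = (1 - 1/real n)^n" if i: "i < n" for i
  proof -
    have "measure P (A i) = (\<Prod>j<n. measure (empirical n y) (- {y i}))"
      unfolding P_def iid_sample_def A_def by (rule measure_Pi_pmf_Pi) simp
    also have "measure (empirical n y) (- {y i}) = measure (pmf_of_set {..<n}) (y -` (- {y i}))"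
      unfolding empirical_def by simp
    also have "\<dots> = card ({..<n} \<inter> y -` (- {y i})) / card {..<n}"
      using n by (subst measure_pmf_of_set) (auto simp: lessThan_empty_iff)
    also have "{..<n} \<inter> y -` (- {y i}) = {..<n} - {i}"
      using inj i by (auto simp: inj_on_def)
    also have "real (card ({..<n} - {i})) / real (card {..<n}) = 1 - 1 / real n"
      using i n by (simp add: field_simps of_nat_diff)
    finally show ?thesis by simp
  qed
  have "measure_pmf.expectation P (\<lambda>X. real (card {i. i<n \<and> (\<forall>j<n. X j \<noteq> y i)}) / (3 * real n))
      = measure_pmf.expectation P (\<lambda>X. \<Sum>i<n. indicator (A i) X) / (3 * real n)"
    unfolding c by simp
  also have "measure_pmf.expectation P (\<lambda>X. \<Sum>i<n. indicator (A i) X) = (\<Sum>i<n. measure P (A i))"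
    by (subst Bochner_Integration.integral_sum) (auto intro!: integrable_real_indicator simp: measure_pmf.emeasure_finite less_top[symmetric])
  also have "\<dots> = (\<Sum>i<n. (1 - 1/real n)^n)" by (intro sum.cong) (auto simp: mA)
  finally show ?thesis using n unfolding P_def by simp
qed


theorem mainTheorem10:
  fixes y :: "nat \<Rightarrow> 'a::{real_inner, complete_space}" and n :: nat
  assumes "n \<ge> 2"
    and "\<forall>i<n. norm (y i) \<le> 1"
    and "\<forall>i<n. \<forall>j<n. i \<noteq> j \<longrightarrow> norm (y i - y j) > 1/3"
  shows "measure_pmf.expectation (iid_sample n (empirical n y)) (\<lambda>X. W2 (empirical n y) (empirical n X))
           \<ge> measure_pmf.expectation (iid_sample n (empirical n y)) (\<lambda>X. W1 (empirical n y) (empirical n X))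
       \<and> measure_pmf.expectation (iid_sample n (empirical n y)) (\<lambda>X. W1 (empirical n y) (empirical n X))
           \<ge> 1 / (12 * sqrt 2)
       \<and> (\<forall>d::nat. (\<exists>B. finite B \<and> independent B \<and> card B = d \<and> (\<forall>i<n. y i \<in> span B)) \<longrightarrow>
            sqrt (measure_pmf.expectation (iid_sample n (empirical n y))
                    (\<lambda>X. (S1 (empirical n y) (empirical n X))^2))
              \<ge> 1 / (12 * sqrt (2 * real d)))"
proof -
  define \<mu> where "\<mu> = empirical n y"
  define P where "P = iid_sample n \<mu>"
  have n: "n > 0" using assms(1) by simp
  have inj: "inj_on y {..<n}" by (rule inj_sep[OF assms(3)])
  have s\<mu>: "set_pmf \<mu> = y ` {..<n}" unfolding \<mu>_def by (rule set_empirical[OF n])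
  have sP: "set_pmf P = PiE_dflt {..<n} 0 (\<lambda>_. y ` {..<n})"
    unfolding P_def iid_sample_def by (subst set_Pi_pmf) (auto simp: s\<mu> o_def)
  have fP: "finite (set_pmf P)" unfolding sP by (intro finite_PiE_dflt) auto
  have XP: "\<forall>j<n. X j \<in> y ` {..<n}" if "X \<in> set_pmf P" for X
    using that unfolding sP PiE_dflt_def by auto
  have sX: "set_pmf (empirical n X) \<subseteq> y ` {..<n}" if "X \<in> set_pmf P" for X
    using XP[OF that] set_empirical[OF n, of X] by auto
  have fX: "finite (set_pmf (empirical n X))" if "X \<in> set_pmf P" for X
    using sX[OF that] finite_subset by blast
  have f\<mu>: "finite (set_pmf \<mu>)" by (simp add: s\<mu>)
  have part1: "measure_pmf.expectation P (\<lambda>X. W1 \<mu> (empirical n X))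
      \<le> measure_pmf.expectation P (\<lambda>X. W2 \<mu> (empirical n X))"
    by (rule pexp_mono[OF fP]) (rule W1_le_W2[OF f\<mu> fX])
  have "1 / (12 * sqrt 2) \<le> (1 - 1/real n)^n / 3" using exp_bound[OF assms(1)] by simp
  also have "\<dots> = measure_pmf.expectation P
           (\<lambda>X. real (card {i. i<n \<and> (\<forall>j<n. X j \<noteq> y i)}) / (3 * real n))"
    unfolding P_def \<mu>_def by (rule exp_empty[OF n inj, symmetric])
  also have "\<dots> \<le> measure_pmf.expectation P (\<lambda>X. W1 \<mu> (empirical n X))"
    by (rule pexp_mono[OF fP]) (unfold \<mu>_def, rule W1_lower[OF n assms(3) XP])
  finally have part2: "1 / (12 * sqrt 2) \<le> measure_pmf.expectation P (\<lambda>X. W1 \<mu> (empirical n X))" .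
  have part3: "sqrt (measure_pmf.expectation P (\<lambda>X. (S1 \<mu> (empirical n X))^2))
              \<ge> 1 / (12 * sqrt (2 * real d))"
    if B: "finite B" "card B = d" "\<forall>i<n. y i \<in> span B" for B d
  proof (cases "d = 0")
    case True
    then show ?thesis by (simp add: integral_nonneg_AE)
  next
    case False
    then have d: "d > 0" by simp
    obtain C where C: "finite C" "card C \<le> card B" "span C = span B" "orthonormal C"
      using gram_schmidt[OF B(1)] by blast
    have yC: "y ` {..<n} \<subseteq> span C" using B(3) C(3) by auto
    define EW where "EW = measure_pmf.expectation P (\<lambda>X. W1 \<mu> (empirical n X))"
    have "(1 / (12 * sqrt (2 * real d)))^2 = (1 / (12 * sqrt 2))^2 / d"
      using d by (simp add: power2_eq_square real_sqrt_mult field_simps)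
    also have "\<dots> \<le> EW^2 / d" using part2 unfolding EW_def
      by (intro divide_right_mono power_mono) auto
    also have "\<dots> \<le> measure_pmf.expectation P (\<lambda>X. (W1 \<mu> (empirical n X))^2) / d"
      unfolding EW_def by (intro divide_right_mono jensen_sq_pmf[OF fP]) auto
    also have "\<dots> = measure_pmf.expectation P (\<lambda>X. (W1 \<mu> (empirical n X) / sqrt d)^2)"
      using d by (simp add: power_divide)
    also have "\<dots> \<le> measure_pmf.expectation P (\<lambda>X. (S1 \<mu> (empirical n X))^2)"
    proof (rule pexp_mono[OF fP])
      fix X assume X: "X \<in> set_pmf P"
      have "W1 \<mu> (empirical n X) / sqrt d \<le> S1 \<mu> (empirical n X)"
        by (rule S1_ge[OF f\<mu> fX[OF X] C(1,4)]) (use s\<mu> yC sX[OF X] C(2) B(2) d in auto)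
      moreover have "0 \<le> W1 \<mu> (empirical n X) / sqrt d" using W1_nonneg[of \<mu> "empirical n X"] by simp
      ultimately show "(W1 \<mu> (empirical n X) / sqrt d)^2 \<le> (S1 \<mu> (empirical n X))^2"
        by (intro power_mono) auto
    qed
    finally show ?thesis by (intro real_le_rsqrt)
  qed
  show ?thesis
    using part1 part2 part3 unfolding P_def \<mu>_def by blast
qed

end
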